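(* Let $G(\mathcal V,\mathcal E)$ be a finite simple directed graph and $f\ge 0$ an integer, and assume Condition 1 holds for $G$. Let $A,B,F$ be a partition of $\mathcal V$ with $A$ non-empty and $|F|\le f$ ($B$ may be empty). If $B\not\rightarrow A$, then $A \Rightarrow_{\mathcal V - F} B$.
   Context: For disjoint sets $X,Y\subseteq\mathcal V$ with $Y$ non-empty, $X\rightarrow Y$ means that $X$ contains at least $f+1$ distinct nodes $i$ such that $(i,j)\in\mathcal E$ for some $j\in Y$; $X\not\rightarrow Y$ means this fails. Condition 1: for every partition $L,C,R,F$ of $\mathcal V$ (with $C$ or $F$ possibly empty) such that $L,R$ are non-empty and $|F|\le f$, either $L\cup C\rightarrow R$ or $R\cup C\rightarrow L$. An $(A,b)$-path is a directed path from some node of $A$ to the node $b\notin A$; it excludes $F$ if it contains no node of $F$; $(A,b)$-paths are disjoint if they pairwise share only $b$. For pairwise disjoint $A,B,F$ with $|F|\le f$, $A \Rightarrow_{\mathcal V - F} B$ means: $B=\emptyset$, or every $b\in B$ has at least $f+1$ pairwise disjoint $(A,b)$-paths excluding $F$. *)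

theory Defs
  imports Main
begin

definition simple_digraph :: "'a set \<Rightarrow> ('a \<times> 'a) set \<Rightarrow> bool" where
  "simple_digraph V E \<longleftrightarrow> finite V \<and> E \<subseteq> V \<times> V \<and> (\<forall>v. (v, v) \<notin> E)"

text \<open>X \<rightarrow> Y: X contains at least f+1 distinct nodes with an edge into Y.\<close>
definition reaches :: "('a \<times> 'a) set \<Rightarrow> nat \<Rightarrow> 'a set \<Rightarrow> 'a set \<Rightarrow> bool" where
  "reaches E f X Y \<longleftrightarrow> card {i \<in> X. \<exists>j \<in> Y. (i, j) \<in> E} \<ge> f + 1"

definition condition1 :: "'a set \<Rightarrow> ('a \<times> 'a) set \<Rightarrow> nat \<Rightarrow> bool" where
  "condition1 V E f \<longleftrightarrow>
    (\<forall>L C R F. L \<union> C \<union> R \<union> F = V \<and>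
       L \<inter> C = {} \<and> L \<inter> R = {} \<and> L \<inter> F = {} \<and>
       C \<inter> R = {} \<and> C \<inter> F = {} \<and> R \<inter> F = {} \<and>
       L \<noteq> {} \<and> R \<noteq> {} \<and> card F \<le> f
       \<longrightarrow> reaches E f (L \<union> C) R \<or> reaches E f (R \<union> C) L)"

definition dpath :: "('a \<times> 'a) set \<Rightarrow> 'a list \<Rightarrow> bool" where
  "dpath E p \<longleftrightarrow> p \<noteq> [] \<and> distinct p \<and>
     (\<forall>i. Suc i < length p \<longrightarrow> (p ! i, p ! Suc i) \<in> E)"

definition AB_path_excl :: "('a \<times> 'a) set \<Rightarrow> 'a set \<Rightarrow> 'a \<Rightarrow> 'a set \<Rightarrow> 'a list \<Rightarrow> bool" where
  "AB_path_excl E A b F p \<longleftrightarrow> b \<notin> A \<and> dpath E p \<and> hd p \<in> A \<and> last p = b \<and>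
     set p \<inter> F = {}"

text \<open>A \<Rightarrow>_{V-F} B (for pairwise disjoint A, B, F with |F| \<le> f, as hypotheses of use).\<close>
definition robust_reach :: "('a \<times> 'a) set \<Rightarrow> nat \<Rightarrow> 'a set \<Rightarrow> 'a set \<Rightarrow> 'a set \<Rightarrow> bool" where
  "robust_reach E f F A B \<longleftrightarrow> B = {} \<or>
     (\<forall>b \<in> B. \<exists>P. finite P \<and> card P \<ge> f + 1 \<and>
        (\<forall>p \<in> P. AB_path_excl E A b F p) \<and>
        (\<forall>p \<in> P. \<forall>q \<in> P. p \<noteq> q \<longrightarrow> set p \<inter> set q = {b}))"

end

theory Submission
  imports Defs
begin

definition pth :: "('a \<times> 'a) set \<Rightarrow> 'a list \<Rightarrow> bool" where
  "pth E p \<longleftrightarrow> p \<noteq> [] \<and> distinct p \<and> successively (\<lambda>a b. (a,b) \<in> E) p"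

definition wlk :: "('a \<times> 'a) set \<Rightarrow> 'a list \<Rightarrow> bool" where
  "wlk E p \<longleftrightarrow> p \<noteq> [] \<and> successively (\<lambda>a b. (a,b) \<in> E) p"

lemma dpath_pth: "dpath E p = pth E p"
  unfolding dpath_def pth_def successively_conv_nth by auto

definition sepr :: "('a \<times> 'a) set \<Rightarrow> 'a set \<Rightarrow> 'a set \<Rightarrow> 'a set \<Rightarrow> bool" where
  "sepr E A B S \<longleftrightarrow> (\<forall>p. pth E p \<and> hd p \<in> A \<and> last p \<in> B \<longrightarrow> set p \<inter> S \<noteq> {})"

definition disj :: "'a list set \<Rightarrow> bool" where
  "disj P \<longleftrightarrow> (\<forall>p\<in>P. \<forall>q\<in>P. p \<noteq> q \<longrightarrow> set p \<inter> set q = {})"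

lemma succ_mono_bl:
  "successively R xs \<Longrightarrow> (\<And>a b. a \<in> set (butlast xs) \<Longrightarrow> R a b \<Longrightarrow> Q a b) \<Longrightarrow> successively Q xs"
  by (induction xs rule: induct_list012) auto

lemma succ_mono_tl:
  "successively R xs \<Longrightarrow> (\<And>a b. b \<in> set (tl xs) \<Longrightarrow> R a b \<Longrightarrow> Q a b) \<Longrightarrow> successively Q xs"
  by (induction xs rule: induct_list012) auto

lemma succ_verts:
  "xs \<noteq> [] \<Longrightarrow> successively R xs \<Longrightarrow> set xs \<subseteq> insert (hd xs) {v. \<exists>u. R u v}"
  by (induction xs rule: induct_list012) auto

lemma pth_mono: "pth E p \<Longrightarrow> E \<subseteq> E' \<Longrightarrow> pth E' p"
  unfolding pth_def by (auto elim: successively_mono)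

lemma pth_suffix: "pth E (p1 @ p2) \<Longrightarrow> p2 \<noteq> [] \<Longrightarrow> pth E p2"
  unfolding pth_def by (auto simp: successively_append_iff)

lemma pth_prefix: "pth E (p1 @ p2) \<Longrightarrow> p1 \<noteq> [] \<Longrightarrow> pth E p1"
  unfolding pth_def by (auto simp: successively_append_iff)

lemma wlk_to_pth:
  "wlk E w \<Longrightarrow> \<exists>p. pth E p \<and> hd p = hd w \<and> last p = last w \<and> set p \<subseteq> set w"
proof (induction w)
  case Nil
  then show ?case by (simp add: wlk_def)
next
  case (Cons a w)
  show ?case
  proof (cases "w = []")
    case True
    then show ?thesis by (intro exI[of _ "[a]"]) (auto simp: pth_def)
  next
    case False
    with Cons.prems have w: "wlk E w" and e: "(a, hd w) \<in> E"
      by (auto simp: wlk_def successively_Cons)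
    from Cons.IH[OF w] obtain p where p: "pth E p" "hd p = hd w" "last p = last w" "set p \<subseteq> set w"
      by blast
    show ?thesis
    proof (cases "a \<in> set p")
      case True
      then obtain p1 p2 where pp: "p = p1 @ a # p2" by (meson split_list)
      have "pth E (a # p2)" using pth_suffix p(1) pp by blast
      then show ?thesis using p pp False
        by (intro exI[of _ "a # p2"]) auto
    next
      case False
      have "p \<noteq> []" using p(1) by (simp add: pth_def)
      then have "pth E (a # p)" using p(1) False e p(2)
        by (auto simp: pth_def successively_Cons)
      then show ?thesis using p \<open>w \<noteq> []\<close> \<open>p \<noteq> []\<close>
        by (intro exI[of _ "a # p"]) auto
    qed
  qed
qed

lemma trunc_first:
  "pth E p \<Longrightarrow> set p \<inter> X \<noteq> {} \<Longrightarrow>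
   \<exists>p'. pth E p' \<and> hd p' = hd p \<and> last p' \<in> X \<and> set p' \<subseteq> set p \<and> set (butlast p') \<inter> X = {}"
proof (induction p)
  case Nil
  then show ?case by simp
next
  case (Cons a p)
  show ?case
  proof (cases "a \<in> X")
    case True
    then show ?thesis by (intro exI[of _ "[a]"]) (auto simp: pth_def)
  next
    case False
    with Cons.prems have ne: "p \<noteq> []" and m: "set p \<inter> X \<noteq> {}" by auto
    have pp: "pth E p" using Cons.prems(1) ne pth_suffix[of E "[a]" p] by simp
    from Cons.IH[OF pp m] obtain p' where
      p': "pth E p'" "hd p' = hd p" "last p' \<in> X" "set p' \<subseteq> set p" "set (butlast p') \<inter> X = {}"
      by blast
    have ne': "p' \<noteq> []" using p' by (simp add: pth_def)
    have "a \<notin> set p" using Cons.prems(1) by (simp add: pth_def)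
    then have "pth E (a # p')" using p' ne' ne Cons.prems(1)
      by (auto simp: pth_def successively_Cons)
    then show ?thesis using p' ne' False
      by (intro exI[of _ "a # p'"]) auto
  qed
qed

lemma trunc_last:
  "pth E q \<Longrightarrow> set q \<inter> X \<noteq> {} \<Longrightarrow>
   \<exists>q'. pth E q' \<and> last q' = last q \<and> hd q' \<in> X \<and> set q' \<subseteq> set q \<and> set (tl q') \<inter> X = {}"
proof (induction q)
  case Nil
  then show ?case by simp
next
  case (Cons a q)
  show ?case
  proof (cases "set q \<inter> X \<noteq> {}")
    case True
    then have ne: "q \<noteq> []" by auto
    have pp: "pth E q" using Cons.prems(1) ne pth_suffix[of E "[a]" q] by simp
    from Cons.IH[OF pp True] obtain q' where
      "pth E q'" "last q' = last q" "hd q' \<in> X" "set q' \<subseteq> set q" "set (tl q') \<inter> X = {}"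
      by blast
    then show ?thesis using ne by (intro exI[of _ q']) auto
  next
    case False
    then show ?thesis using Cons.prems by (intro exI[of _ "a # q"]) auto
  qed
qed

lemma fam_image:
  assumes "disj P" "\<forall>p\<in>P. g p \<noteq> [] \<and> set (g p) \<subseteq> set p"
  shows "inj_on g P \<and> disj (g ` P)"
proof
  show "inj_on g P"
  proof (rule inj_onI, rule ccontr)
    fix p q assume "p \<in> P" "q \<in> P" "g p = g q" "p \<noteq> q"
    then have "set p \<inter> set q = {}" using assms(1) by (auto simp: disj_def)
    moreover have "g p \<noteq> []" "set (g p) \<subseteq> set p" "set (g q) \<subseteq> set q"
      using assms(2) \<open>p \<in> P\<close> \<open>q \<in> P\<close> by auto
    ultimately show False using \<open>g p = g q\<close> by (metis Int_greatest set_empty subset_empty)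
  qed
  show "disj (g ` P)"
    unfolding disj_def
  proof (intro ballI impI)
    fix a b assume "a \<in> g ` P" "b \<in> g ` P" "a \<noteq> b"
    then obtain p q where "p \<in> P" "q \<in> P" "a = g p" "b = g q" by auto
    then have "p \<noteq> q" using \<open>a \<noteq> b\<close> by auto
    then have "set p \<inter> set q = {}" using assms(1) \<open>p \<in> P\<close> \<open>q \<in> P\<close> by (auto simp: disj_def)
    then show "set a \<inter> set b = {}" using assms(2) \<open>p \<in> P\<close> \<open>q \<in> P\<close> \<open>a = g p\<close> \<open>b = g q\<close> by blast
  qed
qed




lemma set_butlast_last: "p \<noteq> [] \<Longrightarrow> set p = insert (last p) (set (butlast p))"
proof -
  assume "p \<noteq> []"
  then have "set p = set (butlast p @ [last p])" by simp
  then show ?thesis by auto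
qed

lemma set_hd_tl: "q \<noteq> [] \<Longrightarrow> set q = insert (hd q) (set (tl q))"
  by (cases q) auto

lemma set_in_tl0: "v \<in> set (tl q) \<Longrightarrow> v \<in> set q"
  by (cases q) auto

lemma set_in_tl: "set q2 \<subseteq> set (tl (q1 @ v # q2))"
  by (cases q1) auto

lemma set_in_butlast: "set p1 \<subseteq> set (butlast (p1 @ v # p2))"
  by (simp add: butlast_append)

lemma pth_avoid_src: "pth E p \<Longrightarrow> x \<notin> set p \<Longrightarrow> pth (E - {(x,y)}) p"
  unfolding pth_def by (auto elim!: successively_mono)

lemma pth_avoid_tgt: "pth E p \<Longrightarrow> y \<notin> set p \<Longrightarrow> pth (E - {(x,y)}) p"
  unfolding pth_def by (auto elim!: successively_mono)

lemma pth_avoid_bl: "pth E p \<Longrightarrow> x \<notin> set (butlast p) \<Longrightarrow> pth (E - {(x,y)}) p"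
  unfolding pth_def by (auto elim!: succ_mono_bl)

lemma pth_avoid_tl: "pth E p \<Longrightarrow> y \<notin> set (tl p) \<Longrightarrow> pth (E - {(x,y)}) p"
  unfolding pth_def by (auto elim!: succ_mono_tl)

lemma menger:
  assumes "finite E" "finite A" "\<forall>v. (v,v) \<notin> E"
    and "\<And>S. finite S \<Longrightarrow> sepr E A B S \<Longrightarrow> k \<le> card S"
  shows "\<exists>P. finite P \<and> card P = k \<and> (\<forall>p\<in>P. pth E p \<and> hd p \<in> A \<and> last p \<in> B) \<and> disj P"
  using assms
proof (induction "card E" arbitrary: E A B k rule: less_induct)
  case less
  show ?case
  proof (cases "E = {}")
    case True
    have "sepr E A B (A \<inter> B)"
      unfolding sepr_def
    proof (intro allI impI)
      fix p assume p: "pth E p \<and> hd p \<in> A \<and> last p \<in> B"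
      then obtain a p0 where pa: "p = a # p0" by (cases p) (auto simp: pth_def)
      have "p0 = []"
      proof (rule ccontr)
        assume "p0 \<noteq> []"
        then have "(a, hd p0) \<in> E" using p pa by (auto simp: pth_def successively_Cons)
        then show False using True by simp
      qed
      then show "set p \<inter> (A \<inter> B) \<noteq> {}" using p pa by auto
    qed
    then have "k \<le> card (A \<inter> B)" by (intro less.prems(4)) (use less.prems(2) in auto)
    then obtain T where T: "T \<subseteq> A \<inter> B" "card T = k"
      by (meson obtain_subset_with_card_n)
    have fT: "finite T" using T(1) less.prems(2) finite_subset by blast
    show ?thesis
    proof (intro exI[of _ "(\<lambda>a. [a]) ` T"] conjI)
      show "finite ((\<lambda>a. [a]) ` T)" using fT by simp
      show "card ((\<lambda>a. [a]) ` T) = k" using T(2) by (simp add: card_image inj_on_def)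
      show "\<forall>p\<in>(\<lambda>a. [a]) ` T. pth E p \<and> hd p \<in> A \<and> last p \<in> B"
        using T(1) by (auto simp: pth_def)
      show "disj ((\<lambda>a. [a]) ` T)" by (auto simp: disj_def)
    qed
  next
    case False
    then obtain x y where xy: "(x, y) \<in> E" by auto
    define E' where "E' = E - {(x, y)}"
    have cE': "card E' < card E" unfolding E'_def using card_Diff1_less[OF less.prems(1) xy] by simp
    have fE': "finite E'" unfolding E'_def using less.prems(1) by simp
    have lE': "\<forall>v. (v,v) \<notin> E'" unfolding E'_def using less.prems(3) by simp
    have E'E: "E' \<subseteq> E" unfolding E'_def by auto
    have xny: "x \<noteq> y" using xy less.prems(3) by auto
    have IH: "\<And>A B k. finite A \<Longrightarrow> (\<And>S. finite S \<Longrightarrow> sepr E' A B S \<Longrightarrow> k \<le> card S) \<Longrightarrow>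
      \<exists>P. finite P \<and> card P = k \<and> (\<forall>p\<in>P. pth E' p \<and> hd p \<in> A \<and> last p \<in> B) \<and> disj P"
    proof -
      fix A B k
      assume a: "finite A" "\<And>S. finite S \<Longrightarrow> sepr E' A B S \<Longrightarrow> k \<le> card S"
      show "\<exists>P. finite P \<and> card P = k \<and> (\<forall>p\<in>P. pth E' p \<and> hd p \<in> A \<and> last p \<in> B) \<and> disj P"
        by (rule less.hyps[OF cE' fE' a(1) lE']) (rule a(2))
    qed
    show ?thesis
    proof (cases "\<forall>S. finite S \<longrightarrow> sepr E' A B S \<longrightarrow> k \<le> card S")
      case True
      have "\<exists>P. finite P \<and> card P = k \<and> (\<forall>p\<in>P. pth E' p \<and> hd p \<in> A \<and> last p \<in> B) \<and> disj P"
        by (rule IH[OF less.prems(2)]) (use True in blast)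
      then obtain P where "finite P" "card P = k" "\<forall>p\<in>P. pth E' p \<and> hd p \<in> A \<and> last p \<in> B" "disj P"
        by blast
      moreover have "\<forall>p\<in>P. pth E p" using \<open>\<forall>p\<in>P. pth E' p \<and> hd p \<in> A \<and> last p \<in> B\<close> pth_mono[OF _ E'E] by blast
      ultimately show ?thesis by blast
    next
      case False
      then obtain S where S0: "finite S" "sepr E' A B S" "\<not> k \<le> card S" by blast
      then have S: "finite S" "sepr E' A B S" "card S < k" by auto
      have sx: "sepr E A B (insert x S)"
        unfolding sepr_def
      proof (intro allI impI)
        fix p assume p: "pth E p \<and> hd p \<in> A \<and> last p \<in> B"
        show "set p \<inter> insert x S \<noteq> {}"
        proof (cases "x \<in> set p")
          case True then show ?thesis by auto
        next
          case False
          have "pth E' p" using pth_avoid_src[OF _ False] p unfolding E'_def by blast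
          then show ?thesis using S(2) p unfolding sepr_def by blast
        qed
      qed
      have sy: "sepr E A B (insert y S)"
        unfolding sepr_def
      proof (intro allI impI)
        fix p assume p: "pth E p \<and> hd p \<in> A \<and> last p \<in> B"
        show "set p \<inter> insert y S \<noteq> {}"
        proof (cases "y \<in> set p")
          case True then show ?thesis by auto
        next
          case False
          have "pth E' p" using pth_avoid_tgt[OF _ False] p unfolding E'_def by blast
          then show ?thesis using S(2) p unfolding sepr_def by blast
        qed
      qed
      have kx: "k \<le> card (insert x S)" by (intro less.prems(4) sx) (use S(1) in simp)
      have ky: "k \<le> card (insert y S)" by (intro less.prems(4) sy) (use S(1) in simp)
      have xS: "x \<notin> S"
      proof
        assume "x \<in> S" then have "insert x S = S" by blast
        then show False using kx S(3) by simp
      qed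
      have yS: "y \<notin> S"
      proof
        assume "y \<in> S" then have "insert y S = S" by blast
        then show False using ky S(3) by simp
      qed
      define Sx where "Sx = insert x S"
      define Sy where "Sy = insert y S"
      have cSx: "card Sx = k" using kx S xS unfolding Sx_def by simp
      have cSy: "card Sy = k" using ky S yS unfolding Sy_def by simp
      have fSx: "finite Sx" "finite Sy" using S(1) unfolding Sx_def Sy_def by auto
      obtain PP where PP: "finite PP" "card PP = k" "\<forall>p\<in>PP. pth E' p \<and> hd p \<in> A \<and> last p \<in> Sx" "disj PP"
      proof -
        have "\<exists>P. finite P \<and> card P = k \<and> (\<forall>p\<in>P. pth E' p \<and> hd p \<in> A \<and> last p \<in> Sx) \<and> disj P"
        proof (rule IH[OF less.prems(2)])
          fix T assume T: "finite T" "sepr E' A Sx T"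
          have "sepr E A B T"
            unfolding sepr_def
          proof (intro allI impI)
            fix p assume p: "pth E p \<and> hd p \<in> A \<and> last p \<in> B"
            then have "set p \<inter> Sx \<noteq> {}" using sx unfolding sepr_def Sx_def by blast
            then obtain p' where p': "pth E p'" "hd p' = hd p" "last p' \<in> Sx" "set p' \<subseteq> set p"
              "set (butlast p') \<inter> Sx = {}"
              using trunc_first p by blast
            have "x \<notin> set (butlast p')" using p'(5) unfolding Sx_def by blast
            then have "pth E' p'" using pth_avoid_bl[OF p'(1)] unfolding E'_def by blast
            then have "set p' \<inter> T \<noteq> {}" using T(2) p'(2,3) p unfolding sepr_def by auto
            then show "set p \<inter> T \<noteq> {}" using p'(4) by blast
          qed
          then show "k \<le> card T" using T(1) by (intro less.prems(4))
        qed
        then show ?thesis using that by blast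
      qed
      obtain QQ where QQ: "finite QQ" "card QQ = k" "\<forall>p\<in>QQ. pth E' p \<and> hd p \<in> Sy \<and> last p \<in> B" "disj QQ"
      proof -
        have "\<exists>P. finite P \<and> card P = k \<and> (\<forall>p\<in>P. pth E' p \<and> hd p \<in> Sy \<and> last p \<in> B) \<and> disj P"
        proof (rule IH[OF fSx(2)])
          fix T assume T: "finite T" "sepr E' Sy B T"
          have "sepr E A B T"
            unfolding sepr_def
          proof (intro allI impI)
            fix p assume p: "pth E p \<and> hd p \<in> A \<and> last p \<in> B"
            then have "set p \<inter> Sy \<noteq> {}" using sy unfolding sepr_def Sy_def by blast
            then obtain p' where p': "pth E p'" "last p' = last p" "hd p' \<in> Sy" "set p' \<subseteq> set p"
              "set (tl p') \<inter> Sy = {}"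
              using trunc_last p by blast
            have "y \<notin> set (tl p')" using p'(5) unfolding Sy_def by blast
            then have "pth E' p'" using pth_avoid_tl[OF p'(1)] unfolding E'_def by blast
            then have "set p' \<inter> T \<noteq> {}" using T(2) p'(2,3) p unfolding sepr_def by auto
            then show "set p \<inter> T \<noteq> {}" using p'(4) by blast
          qed
          then show "k \<le> card T" using T(1) by (intro less.prems(4))
        qed
        then show ?thesis using that by blast
      qed
      obtain g where g: "\<forall>p\<in>PP. pth E' (g p) \<and> hd (g p) = hd p \<and> last (g p) \<in> Sx \<and>
          set (g p) \<subseteq> set p \<and> set (butlast (g p)) \<inter> Sx = {}"
      proof -
        have "\<forall>p\<in>PP. \<exists>p'. pth E' p' \<and> hd p' = hd p \<and> last p' \<in> Sx \<and>
          set p' \<subseteq> set p \<and> set (butlast p') \<inter> Sx = {}"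
        proof
          fix p assume "p \<in> PP"
          then have "pth E' p" "last p \<in> Sx" using PP(3) by auto
          moreover have "p \<noteq> []" using \<open>pth E' p\<close> by (simp add: pth_def)
          ultimately have "set p \<inter> Sx \<noteq> {}" using last_in_set by blast
          then show "\<exists>p'. pth E' p' \<and> hd p' = hd p \<and> last p' \<in> Sx \<and>
            set p' \<subseteq> set p \<and> set (butlast p') \<inter> Sx = {}"
            using trunc_first[OF \<open>pth E' p\<close>] by blast
        qed
        then show ?thesis using that by metis
      qed
      obtain h where h: "\<forall>q\<in>QQ. pth E' (h q) \<and> last (h q) = last q \<and> hd (h q) \<in> Sy \<and>
          set (h q) \<subseteq> set q \<and> set (tl (h q)) \<inter> Sy = {}"
      proof -
        have "\<forall>q\<in>QQ. \<exists>q'. pth E' q' \<and> last q' = last q \<and> hd q' \<in> Sy \<and>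
          set q' \<subseteq> set q \<and> set (tl q') \<inter> Sy = {}"
        proof
          fix q assume "q \<in> QQ"
          then have "pth E' q" "hd q \<in> Sy" using QQ(3) by auto
          moreover have "q \<noteq> []" using \<open>pth E' q\<close> by (simp add: pth_def)
          ultimately have "set q \<inter> Sy \<noteq> {}" using hd_in_set by blast
          then show "\<exists>q'. pth E' q' \<and> last q' = last q \<and> hd q' \<in> Sy \<and>
            set q' \<subseteq> set q \<and> set (tl q') \<inter> Sy = {}"
            using trunc_last[OF \<open>pth E' q\<close>] by blast
        qed
        then show ?thesis using that by metis
      qed
      define P1 where "P1 = g ` PP"
      define Q1 where "Q1 = h ` QQ"
      have gne: "\<forall>p\<in>PP. g p \<noteq> [] \<and> set (g p) \<subseteq> set p" using g by (auto simp: pth_def)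
      have hne: "\<forall>q\<in>QQ. h q \<noteq> [] \<and> set (h q) \<subseteq> set q" using h by (auto simp: pth_def)
      have P1: "finite P1" "card P1 = k" "disj P1"
        using fam_image[OF PP(4) gne] PP(1,2) unfolding P1_def by (auto simp: card_image)
      have Q1: "finite Q1" "card Q1 = k" "disj Q1"
        using fam_image[OF QQ(4) hne] QQ(1,2) unfolding Q1_def by (auto simp: card_image)
      have P1p: "\<And>p. p \<in> P1 \<Longrightarrow> pth E' p \<and> hd p \<in> A \<and> last p \<in> Sx \<and> set (butlast p) \<inter> Sx = {}"
        using g PP(3) unfolding P1_def by auto
      have Q1p: "\<And>q. q \<in> Q1 \<Longrightarrow> pth E' q \<and> last q \<in> B \<and> hd q \<in> Sy \<and> set (tl q) \<inter> Sy = {}"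
        using h QQ(3) unfolding Q1_def by auto
      have P1ne: "\<And>p. p \<in> P1 \<Longrightarrow> p \<noteq> []" using P1p by (auto simp: pth_def)
      have Q1ne: "\<And>q. q \<in> Q1 \<Longrightarrow> q \<noteq> []" using Q1p by (auto simp: pth_def)
      have injl: "inj_on last P1"
      proof (rule inj_onI, rule ccontr)
        fix p p' assume a: "p \<in> P1" "p' \<in> P1" "last p = last p'" "p \<noteq> p'"
        then have "set p \<inter> set p' = {}" using P1(3) by (auto simp: disj_def)
        then show False using a P1ne[OF a(1)] P1ne[OF a(2)] by (metis disjoint_iff last_in_set)
      qed
      have injh: "inj_on hd Q1"
      proof (rule inj_onI, rule ccontr)
        fix p p' assume a: "p \<in> Q1" "p' \<in> Q1" "hd p = hd p'" "p \<noteq> p'"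
        then have "set p \<inter> set p' = {}" using Q1(3) by (auto simp: disj_def)
        then show False using a Q1ne[OF a(1)] Q1ne[OF a(2)] by (metis disjoint_iff hd_in_set)
      qed
      have lastP1: "last ` P1 = Sx"
      proof (rule card_subset_eq[OF fSx(1)])
        show "last ` P1 \<subseteq> Sx" using P1p by auto
        show "card (last ` P1) = card Sx" using card_image[OF injl] P1(2) cSx by simp
      qed
      have hdQ1: "hd ` Q1 = Sy"
      proof (rule card_subset_eq[OF fSx(2)])
        show "hd ` Q1 \<subseteq> Sy" using Q1p by auto
        show "card (hd ` Q1) = card Sy" using card_image[OF injh] Q1(2) cSy by simp
      qed
      have SSx: "S \<subseteq> Sx" "S \<subseteq> Sy" unfolding Sx_def Sy_def by auto
      have inSp: "\<And>p v. p \<in> P1 \<Longrightarrow> v \<in> set p \<Longrightarrow> v \<in> S \<Longrightarrow> v = last p"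
      proof -
        fix p v assume a: "p \<in> P1" "v \<in> set p" "v \<in> S"
        have "set p = insert (last p) (set (butlast p))" using set_butlast_last P1ne[OF a(1)] by blast
        then show "v = last p" using a P1p[OF a(1)] SSx by blast
      qed
      have inSq: "\<And>q v. q \<in> Q1 \<Longrightarrow> v \<in> set (tl q) \<Longrightarrow> v \<in> S \<Longrightarrow> False"
        using Q1p SSx by blast
      have cross: "\<And>p q v. p \<in> P1 \<Longrightarrow> q \<in> Q1 \<Longrightarrow> v \<in> set p \<Longrightarrow> v \<in> set q \<Longrightarrow> v \<notin> S \<Longrightarrow> False"
      proof -
        fix p q v assume a: "p \<in> P1" "q \<in> Q1" "v \<in> set p" "v \<in> set q" "v \<notin> S"
        obtain p1 p2 where pp: "p = p1 @ v # p2" using a(3) by (meson split_list)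
        obtain q1 q2 where qq: "q = q1 @ v # q2" using a(4) by (meson split_list)
        have sp: "successively (\<lambda>a b. (a,b) \<in> E') (p1 @ v # p2)"
          using P1p[OF a(1)] pp by (simp add: pth_def)
        have sq: "successively (\<lambda>a b. (a,b) \<in> E') (q1 @ v # q2)"
          using Q1p[OF a(2)] qq by (simp add: pth_def)
        have "successively (\<lambda>a b. (a,b) \<in> E') (p1 @ v # q2)"
          using sp sq by (auto simp: successively_append_iff)
        then have w: "wlk E' (p1 @ v # q2)" by (simp add: wlk_def)
        obtain r where r: "pth E' r" "hd r = hd (p1 @ v # q2)" "last r = last (p1 @ v # q2)"
          "set r \<subseteq> set (p1 @ v # q2)" using wlk_to_pth[OF w] by blast
        have "hd (p1 @ v # q2) = hd p" using pp by (cases p1) auto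
        then have "hd r \<in> A" using r(2) P1p[OF a(1)] by simp
        moreover have "last (p1 @ v # q2) = last q" using qq by simp
        then have "last r \<in> B" using r(3) Q1p[OF a(2)] by simp
        ultimately have "set r \<inter> S \<noteq> {}" using S(2) r(1) unfolding sepr_def by blast
        moreover have "set p1 \<inter> S = {}" using set_in_butlast[of p1 v p2] P1p[OF a(1)] pp SSx by blast
        moreover have "set q2 \<inter> S = {}" using set_in_tl[of q2 q1 v] Q1p[OF a(2)] qq SSx by blast
        ultimately show False using r(4) a(5) by auto
      qed
      define qof where "qof v = (SOME q. q \<in> Q1 \<and> hd q = v)" for v
      have qof: "\<And>v. v \<in> Sy \<Longrightarrow> qof v \<in> Q1 \<and> hd (qof v) = v"
      proof -
        fix v assume "v \<in> Sy"
        then have "\<exists>q. q \<in> Q1 \<and> hd q = v" using hdQ1 by blast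
        then show "qof v \<in> Q1 \<and> hd (qof v) = v" unfolding qof_def by (rule someI_ex)
      qed
      define phi where "phi p = (if last p = x then y else last p)" for p
      have phiS: "\<And>p. p \<in> P1 \<Longrightarrow> phi p \<in> Sy"
        using P1p unfolding phi_def Sx_def Sy_def by auto
      have phi_inj: "\<And>p p'. p \<in> P1 \<Longrightarrow> p' \<in> P1 \<Longrightarrow> phi p = phi p' \<Longrightarrow> p = p'"
      proof -
        fix p p' assume a: "p \<in> P1" "p' \<in> P1" "phi p = phi p'"
        have l1: "last p \<in> Sx" "last p' \<in> Sx" using P1p a by auto
        have "last p = last p'"
        proof (cases "last p = x")
          case True
          then show ?thesis
          proof (cases "last p' = x")
            case False
            then have "last p' \<in> S" using l1 unfolding Sx_def by auto
            moreover have "last p' = y" using a(3) True False unfolding phi_def by simp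
            ultimately show ?thesis using yS by simp
          qed (use True in simp)
        next
          case False
          then have "last p \<in> S" using l1 unfolding Sx_def by auto
          show ?thesis
          proof (cases "last p' = x")
            case True
            then have "last p = y" using a(3) False unfolding phi_def by simp
            then show ?thesis using yS \<open>last p \<in> S\<close> by simp
          qed (use a(3) False in \<open>simp add: phi_def\<close>)
        qed
        then show "p = p'" using injl a(1,2) by (meson inj_onD)
      qed
      define comb where "comb p = (if last p = x then p @ qof y else p @ tl (qof (last p)))" for p
      have comb_set: "\<And>p. set (comb p) \<subseteq> set p \<union> set (qof (phi p))"
        unfolding comb_def phi_def by (auto dest: set_in_tl0)
      have comb_ok: "\<And>p. p \<in> P1 \<Longrightarrow> pth E (comb p) \<and> hd (comb p) \<in> A \<and> last (comb p) \<in> B"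
      proof -
        fix p assume pP: "p \<in> P1"
        have pne: "p \<noteq> []" using P1ne pP by blast
        have ppth: "pth E p" using P1p[OF pP] pth_mono[OF _ E'E] by blast
        have hdc: "hd (comb p) = hd p" unfolding comb_def using pne by simp
        show "pth E (comb p) \<and> hd (comb p) \<in> A \<and> last (comb p) \<in> B"
        proof (cases "last p = x")
          case True
          define q where "q = qof y"
          have qQ: "q \<in> Q1" "hd q = y" using qof[of y] unfolding q_def Sy_def by auto
          have qne: "q \<noteq> []" using Q1ne qQ by blast
          have qpth: "pth E q" using Q1p[OF qQ(1)] pth_mono[OF _ E'E] by blast
          have dj: "set p \<inter> set q = {}"
          proof (rule ccontr)
            assume "set p \<inter> set q \<noteq> {}"
            then obtain v where v: "v \<in> set p" "v \<in> set q" by blast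
            show False
            proof (cases "v \<in> S")
              case True
              then have "v = x" using inSp[OF pP v(1)] \<open>last p = x\<close> by simp
              then show False using True xS by simp
            qed (use cross[OF pP qQ(1) v] in blast)
          qed
          have "pth E (p @ q)" using ppth qpth dj pne qne xy True qQ(2)
            unfolding pth_def by (auto simp: successively_append_iff)
          moreover have "last (p @ q) = last q" using qne by simp
          ultimately show ?thesis using True Q1p[OF qQ(1)] hdc P1p[OF pP] unfolding comb_def q_def by simp
        next
          case False
          define s where "s = last p"
          have sS: "s \<in> S" using P1p[OF pP] False unfolding s_def Sx_def by auto
          define q where "q = qof s"
          have qQ: "q \<in> Q1" "hd q = s" using qof[of s] sS unfolding q_def Sy_def by auto
          have qne: "q \<noteq> []" using Q1ne qQ by blast
          have qpth: "pth E q" using Q1p[OF qQ(1)] pth_mono[OF _ E'E] by blast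
          have cm: "comb p = p @ tl q" unfolding comb_def q_def s_def using False by simp
          show ?thesis
          proof (cases "tl q = []")
            case True
            then have "q = [s]" using qne qQ(2) by (cases q) auto
            then have "last p \<in> B" using Q1p[OF qQ(1)] s_def by simp
            then show ?thesis using cm True ppth hdc P1p[OF pP] by simp
          next
            case tne: False
            have dj: "set p \<inter> set (tl q) = {}"
            proof (rule ccontr)
              assume "set p \<inter> set (tl q) \<noteq> {}"
              then obtain v where v: "v \<in> set p" "v \<in> set (tl q)" by blast
              show False
              proof (cases "v \<in> S")
                case True
                then show False using inSq[OF qQ(1) v(2)] by blast
              next
                case False
                have "v \<in> set q" using v(2) qne by (cases q) auto
                then show False using cross[OF pP qQ(1) v(1)] False by blast
              qed
            qed
            have qeq: "q = s # tl q" using qne qQ(2) by (cases q) auto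
            have "successively (\<lambda>a b. (a,b) \<in> E) (s # tl q)" using qpth qeq unfolding pth_def by metis
            then have e1: "(s, hd (tl q)) \<in> E" and e2: "successively (\<lambda>a b. (a,b) \<in> E) (tl q)"
              using tne by (auto simp: successively_Cons)
            have "distinct (tl q)" using qpth by (simp add: pth_def distinct_tl)
            then have "pth E (p @ tl q)" using ppth dj pne tne e1 e2 s_def
              unfolding pth_def by (auto simp: successively_append_iff)
            moreover have "last (p @ tl q) = last q" using tne qeq
              by (metis last_ConsR last_appendR)
            ultimately show ?thesis using cm Q1p[OF qQ(1)] hdc P1p[OF pP] by simp
          qed
        qed
      qed
      have comb_disj: "\<And>p p'. p \<in> P1 \<Longrightarrow> p' \<in> P1 \<Longrightarrow> p \<noteq> p' \<Longrightarrow> set (comb p) \<inter> set (comb p') = {}"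
      proof -
        have mix: "\<And>p p' v. p \<in> P1 \<Longrightarrow> p' \<in> P1 \<Longrightarrow> p \<noteq> p' \<Longrightarrow> v \<in> set p \<Longrightarrow> v \<in> set (qof (phi p')) \<Longrightarrow> False"
        proof -
          fix p p' v assume a: "p \<in> P1" "p' \<in> P1" "p \<noteq> p'" "v \<in> set p" "v \<in> set (qof (phi p'))"
          have q: "qof (phi p') \<in> Q1" "hd (qof (phi p')) = phi p'" using qof phiS a(2) by auto
          show False
          proof (cases "v \<in> S")
            case True
            then have vl: "v = last p" using inSp a by blast
            have "v \<notin> set (tl (qof (phi p')))" using inSq[OF q(1)] True by blast
            then have "v = phi p'" using a(5) q(2) set_hd_tl[OF Q1ne[OF q(1)]] by simp
            moreover have "phi p = v" using vl True xS unfolding phi_def by auto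
            ultimately show False using phi_inj a by metis
          qed (use cross[OF a(1) q(1) a(4) a(5)] in blast)
        qed
        fix p p' assume a: "p \<in> P1" "p' \<in> P1" "p \<noteq> p'"
        have d1: "set p \<inter> set p' = {}" using P1(3) a unfolding disj_def by blast
        have "phi p \<noteq> phi p'" using phi_inj a by blast
        then have "qof (phi p) \<noteq> qof (phi p')" using qof phiS a by metis
        then have d2: "set (qof (phi p)) \<inter> set (qof (phi p')) = {}"
          using Q1(3) qof phiS a unfolding disj_def by blast
        show "set (comb p) \<inter> set (comb p') = {}"
        proof (rule ccontr)
          assume "set (comb p) \<inter> set (comb p') \<noteq> {}"
          then obtain v where v: "v \<in> set (comb p)" "v \<in> set (comb p')" by blast
          then have "v \<in> set p \<union> set (qof (phi p))" "v \<in> set p' \<union> set (qof (phi p'))"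
            using comb_set by blast+
          then show False using d1 d2 mix[OF a(1,2,3)] mix[OF a(2,1) a(3)[symmetric]] by blast
        qed
      qed
      have comb_inj: "inj_on comb P1"
      proof (rule inj_onI, rule ccontr)
        fix p p' assume a: "p \<in> P1" "p' \<in> P1" "comb p = comb p'" "p \<noteq> p'"
        have "comb p \<noteq> []" using comb_ok[OF a(1)] by (simp add: pth_def)
        then show False using comb_disj[OF a(1,2,4)] a(3) by simp
      qed
      show ?thesis
      proof (intro exI[of _ "comb ` P1"] conjI)
        show "finite (comb ` P1)" using P1(1) by simp
        show "card (comb ` P1) = k" using card_image[OF comb_inj] P1(2) by simp
        show "\<forall>p\<in>comb ` P1. pth E p \<and> hd p \<in> A \<and> last p \<in> B" using comb_ok by blast
        show "disj (comb ` P1)" unfolding disj_def using comb_disj by blast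
      qed
    qed
  qed
qed


lemma pth_verts: "pth E p \<Longrightarrow> set p \<subseteq> insert (hd p) {v. \<exists>u. (u,v) \<in> E}"
  unfolding pth_def using succ_verts[of p "\<lambda>a b. (a,b) \<in> E"] by blast

theorem lemma5:
  fixes V :: "'a set" and E :: "('a \<times> 'a) set" and f :: nat and A B F :: "'a set"
  assumes "simple_digraph V E"
    and "condition1 V E f"
    and "A \<union> B \<union> F = V" and "A \<inter> B = {}" and "A \<inter> F = {}" and "B \<inter> F = {}"
    and "A \<noteq> {}" and "card F \<le> f"
    and "\<not> reaches E f B A"
  shows "robust_reach E f F A B"
proof -
  note sd = assms(1)[unfolded simple_digraph_def]
  have fV: "finite V" and EV: "E \<subseteq> V \<times> V" and loop: "\<forall>v. (v,v) \<notin> E" using sd by auto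
  have fA: "finite A" using fV assms(3) by (metis finite_Un)
  have "\<forall>b\<in>B. \<exists>P. finite P \<and> card P \<ge> f + 1 \<and>
        (\<forall>p \<in> P. AB_path_excl E A b F p) \<and>
        (\<forall>p \<in> P. \<forall>q \<in> P. p \<noteq> q \<longrightarrow> set p \<inter> set q = {b})"
  proof
    fix b assume bB: "b \<in> B"
    have bA: "b \<notin> A" and bF: "b \<notin> F" and bV: "b \<in> V" using bB assms(3,4,6) by auto
    define E' where "E' = {(u,v). (u,v) \<in> E \<and> u \<notin> F \<and> v \<notin> F \<and> u \<noteq> b \<and> v \<noteq> b}"
    define N where "N = {u. (u,b) \<in> E \<and> u \<notin> F}"
    have fE: "finite E" using finite_subset[OF EV] fV by blast
    have E'E: "E' \<subseteq> E" unfolding E'_def by auto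
    have fE': "finite E'" using finite_subset[OF E'E fE] .
    have lE': "\<forall>v. (v,v) \<notin> E'" using loop unfolding E'_def by auto
    have vE': "\<And>p. pth E' p \<Longrightarrow> hd p \<in> A \<Longrightarrow> b \<notin> set p \<and> set p \<inter> F = {}"
    proof -
      fix p assume p: "pth E' p" "hd p \<in> A"
      have "set p \<subseteq> insert (hd p) {v. \<exists>u. (u,v) \<in> E'}" using pth_verts[OF p(1)] .
      then show "b \<notin> set p \<and> set p \<inter> F = {}" using p(2) bA assms(5) unfolding E'_def by blast
    qed
    have "\<exists>P. finite P \<and> card P = f + 1 \<and> (\<forall>p\<in>P. pth E' p \<and> hd p \<in> A \<and> last p \<in> N) \<and> disj P"
    proof (rule menger[OF fE' fA lE'])
      fix S assume S: "finite S" "sepr E' A N S"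
      show "f + 1 \<le> card S"
      proof (rule ccontr)
        assume "\<not> f + 1 \<le> card S"
        then have cS: "card S \<le> f" by simp
        define S0 where "S0 = S - {b}"
        have cS0: "card S0 \<le> f" using cS card_mono[OF S(1), of S0] unfolding S0_def by auto
        have fS0: "finite S0" using S(1) unfolding S0_def by simp
        have sep0: "sepr E' A N S0"
          unfolding sepr_def
        proof (intro allI impI)
          fix p assume p: "pth E' p \<and> hd p \<in> A \<and> last p \<in> N"
          then have "set p \<inter> S \<noteq> {}" using S(2) unfolding sepr_def by blast
          moreover have "b \<notin> set p" using vE' p by blast
          ultimately show "set p \<inter> S0 \<noteq> {}" unfolding S0_def by blast
        qed
        define R where "R = {v \<in> V. v \<notin> F \<and> v \<notin> S0 \<and>
           (\<exists>p. pth E p \<and> hd p = v \<and> last p = b \<and> set p \<inter> (F \<union> S0) = {})}"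
        have bR: "b \<in> R" unfolding R_def using bV bF
          by (auto simp: S0_def pth_def intro!: exI[of _ "[b]"])
        have AR: "A \<inter> R = {}"
        proof (rule ccontr)
          assume "A \<inter> R \<noteq> {}"
          then obtain a p where a: "a \<in> A" and p: "pth E p" "hd p = a" "last p = b" "set p \<inter> (F \<union> S0) = {}"
            unfolding R_def by blast
          have pne: "p \<noteq> []" using p by (simp add: pth_def)
          define p' where "p' = butlast p"
          have peq: "p = p' @ [b]" using pne p(3) append_butlast_last_id[OF pne] unfolding p'_def by simp
          have p'ne: "p' \<noteq> []" using peq p(2) a bA by (cases p') auto
          have bp': "b \<notin> set p'" using p(1) peq by (simp add: pth_def)
          have succ: "successively (\<lambda>a b. (a,b) \<in> E) p'" and eb: "(last p', b) \<in> E"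
            using p(1) peq p'ne by (auto simp: pth_def successively_append_iff)
          have sp'F: "set p' \<inter> (F \<union> S0) = {}" using p(4) peq by auto
          have "successively (\<lambda>u v. (u,v) \<in> E') p'"
            by (rule successively_mono[OF succ]) (use bp' sp'F in \<open>auto simp: E'_def\<close>)
          then have "pth E' p'" using p(1) peq p'ne by (simp add: pth_def)
          moreover have "hd p' \<in> A" using p(2) peq p'ne a by simp
          moreover have "last p' \<in> N" using eb sp'F last_in_set[OF p'ne] unfolding N_def by blast
          ultimately have "set p' \<inter> S0 \<noteq> {}" using sep0 unfolding sepr_def by blast
          then show False using sp'F by blast
        qed
        define C where "C = V - F - A - R"
        have RV: "R \<subseteq> V" unfolding R_def by auto
        have RF: "R \<inter> F = {}" unfolding R_def by auto
        have part: "A \<union> C \<union> R \<union> F = V" using RV assms(3) unfolding C_def by blast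
        have RC: "R \<union> C = B" using RV RF AR assms(3,4,5,6) unfolding C_def by blast
        have "reaches E f (A \<union> C) R \<or> reaches E f (R \<union> C) A"
        proof (rule assms(2)[unfolded condition1_def, rule_format, of A C R F], intro conjI)
          show "A \<union> C \<union> R \<union> F = V" by (rule part)
          show "A \<inter> C = {}" unfolding C_def by blast
          show "A \<inter> R = {}" by (rule AR)
          show "A \<inter> F = {}" by (rule assms(5))
          show "C \<inter> R = {}" unfolding C_def by blast
          show "C \<inter> F = {}" unfolding C_def by blast
          show "R \<inter> F = {}" by (rule RF)
          show "A \<noteq> {}" by (rule assms(7))
          show "R \<noteq> {}" using bR by blast
          show "card F \<le> f" by (rule assms(8))
        qed
        then have "reaches E f (A \<union> C) R" using assms(9) RC by simp
        moreover have "{i \<in> A \<union> C. \<exists>j\<in>R. (i, j) \<in> E} \<subseteq> S0"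
        proof
          fix i assume "i \<in> {i \<in> A \<union> C. \<exists>j\<in>R. (i, j) \<in> E}"
          then obtain j where i: "i \<in> A \<union> C" and j: "j \<in> R" and ij: "(i,j) \<in> E" by blast
          have iR: "i \<notin> R" using i AR unfolding C_def by blast
          have iV: "i \<in> V" and iF: "i \<notin> F" using i assms(3,5) unfolding C_def by auto
          show "i \<in> S0"
          proof (rule ccontr)
            assume iS: "i \<notin> S0"
            obtain pj where pj: "pth E pj" "hd pj = j" "last pj = b" "set pj \<inter> (F \<union> S0) = {}"
              using j unfolding R_def by blast
            have pjne: "pj \<noteq> []" using pj by (simp add: pth_def)
            have "i \<in> R"
            proof (cases "i \<in> set pj")
              case True
              then obtain p1 p2 where pp: "pj = p1 @ i # p2" by (meson split_list)
              have "pth E (i # p2)" using pth_suffix pj(1) pp by blast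
              moreover have "last (i # p2) = b" using pj(3) pp by simp
              moreover have "set (i # p2) \<inter> (F \<union> S0) = {}" using pj(4) pp by auto
              ultimately show ?thesis unfolding R_def using iV iF iS by (auto intro!: exI[of _ "i # p2"])
            next
              case False
              have "pth E (i # pj)" using pj(1,2) False ij pjne by (auto simp: pth_def successively_Cons)
              moreover have "last (i # pj) = b" using pj(3) pjne by simp
              moreover have "set (i # pj) \<inter> (F \<union> S0) = {}" using pj(4) iF iS by auto
              ultimately show ?thesis unfolding R_def using iV iF iS by (auto intro!: exI[of _ "i # pj"])
            qed
            then show False using iR by blast
          qed
        qed
        then have "card {i \<in> A \<union> C. \<exists>j\<in>R. (i, j) \<in> E} \<le> card S0" using card_mono[OF fS0] by blast
        ultimately show False using cS0 unfolding reaches_def by simp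
      qed
    qed
    then obtain P where P: "finite P" "card P = f + 1" "\<forall>p\<in>P. pth E' p \<and> hd p \<in> A \<and> last p \<in> N" "disj P"
      by blast
    define P' where "P' = (\<lambda>p. p @ [b]) ` P"
    have inj: "inj_on (\<lambda>p. p @ [b]) P" by (auto simp: inj_on_def)
    show "\<exists>P. finite P \<and> card P \<ge> f + 1 \<and>
        (\<forall>p \<in> P. AB_path_excl E A b F p) \<and>
        (\<forall>p \<in> P. \<forall>q \<in> P. p \<noteq> q \<longrightarrow> set p \<inter> set q = {b})"
    proof (intro exI[of _ P'] conjI)
      show "finite P'" using P(1) unfolding P'_def by simp
      show "card P' \<ge> f + 1" using card_image[OF inj] P(2) unfolding P'_def by simp
      show "\<forall>p\<in>P'. AB_path_excl E A b F p"
      proof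
        fix p' assume "p' \<in> P'"
        then obtain p where pP: "p \<in> P" and pe: "p' = p @ [b]" unfolding P'_def by blast
        have p: "pth E' p" "hd p \<in> A" "last p \<in> N" using P(3) pP by auto
        have v: "b \<notin> set p" "set p \<inter> F = {}" using vE' p by auto
        have pne: "p \<noteq> []" using p by (simp add: pth_def)
        have "pth E p" using pth_mono[OF p(1) E'E] .
        then have "pth E (p @ [b])" using v pne p(3) unfolding pth_def N_def
          by (auto simp: successively_append_iff)
        then show "AB_path_excl E A b F p'"
          unfolding AB_path_excl_def dpath_pth pe using bA p(2) pne v bF by auto
      qed
      show "\<forall>p\<in>P'. \<forall>q\<in>P'. p \<noteq> q \<longrightarrow> set p \<inter> set q = {b}"
      proof (intro ballI impI)
        fix p' q' assume a: "p' \<in> P'" "q' \<in> P'" "p' \<noteq> q'"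
        then obtain p q where "p \<in> P" "q \<in> P" "p' = p @ [b]" "q' = q @ [b]" unfolding P'_def by blast
        moreover then have "p \<noteq> q" using a(3) by blast
        ultimately have "set p \<inter> set q = {}" using P(4) unfolding disj_def by blast
        then show "set p' \<inter> set q' = {b}" using \<open>p' = p @ [b]\<close> \<open>q' = q @ [b]\<close> by auto
      qed
    qed
  qed
  then show ?thesis unfolding robust_reach_def by blast
qed

end
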